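(* Let $G$ be a reflexive graph, and suppose that an edge $vv'$ of $G$ avoids a walk $u_0u_1\dots u_t$ ($t\ge1$) in $G$. Then: 1. If neither $\{u_0,u_1,v,v'\}$ nor $\{u_{t-1},u_t,v,v'\}$ induces a $C_4$, then $(u_0,x)\sim(u_t,y)$ for all $x\in\{v,v'\}$ and $y\in\{v,v'\}$. 2. If $\{u_0,u_1,v,v'\}$ induces a $C_4$ and $\{u_{t-1},u_t,v,v'\}$ does not, then $(u_0,x)\sim(u_t,y)$ for every $y\in\{v,v'\}$, where $x$ is the unique vertex of $\{v,v'\}$ with $u_0x\in E(G)$. 3. If both $\{u_0,u_1,v,v'\}$ and $\{u_{t-1},u_t,v,v'\}$ induce a $C_4$, then $(u_0,x)\sim(u_t,y)$, where $x$ is the unique vertex of $\{v,v'\}$ with $u_0x\in E(G)$ and $y$ is the unique vertex of $\{v,v'\}$ with $u_ty\in E(G)$.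
   Context: A graph is reflexive if every vertex carries a loop; its edge set $E(G)$ contains all loops $vv$, and an "edge" $uu'$ may be a loop ($u=u'$). A walk $u_0u_1\dots u_t$ ($t\ge 1$) is a sequence of vertices with $u_ju_{j+1}\in E(G)$ for all $j$ (consecutive vertices may coincide); its edges are $u_ju_{j+1}$. $Z(G)$ is the set of ordered pairs $(u,v)$ of distinct vertices of $G$. For $(u,v),(u',v')\in Z(G)$, $(u,v)$ forces $(u',v')$, written $(u,v)\Lambda(u',v')$, if either $u=u'$ and $v=v'$, or $uu'\in E(G)$, $vv'\in E(G)$, $uv'\notin E(G)$ and $vu'\notin E(G)$. We write $(u,v)\sim(u',v')$ ($(u,v)$ implies $(u',v')$) if there are walks $w_1w_2\dots w_m$ and $z_1z_2\dots z_m$ in $G$ with $(w_1,z_1)=(u,v)$, $(w_m,z_m)=(u',v')$ and $(w_j,z_j)\Lambda(w_{j+1},z_{j+1})$ for $j=1,\dots,m-1$; this is an equivalence relation on $Z(G)$. For edges $uu'$, $vv'$ of a reflexive graph $G$ with $\{u,u'\}\cap\{v,v'\}=\emptyset$, $uu'$ avoids $vv'$ if one of the following holds: (i) $u=u'$, $v=v'$, $uv\notin E(G)$; (ii) $u=u'$, $v\ne v'$, $uv\notin E(G)$ and $uv'\notin E(G)$; (iii) $u\ne u'$, $v=v'$, $uv\notin E(G)$ and $u'v\notin E(G)$; (iv) $u\ne u'$, $v\ne v'$, and $\{u,u',v,v'\}$ induces a $2K_2$, a $P_4$, or a $C_4$ in $G$. An edge avoids a walk if it avoids every edge of the walk. 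*)

theory Defs
  imports Main
begin

definition reflexive_graph :: "'a set \<Rightarrow> ('a \<Rightarrow> 'a \<Rightarrow> bool) \<Rightarrow> bool" where
  "reflexive_graph V E \<longleftrightarrow>
     (\<forall>u v. E u v \<longrightarrow> u \<in> V \<and> v \<in> V) \<and>
     (\<forall>u v. E u v \<longrightarrow> E v u) \<and>
     (\<forall>v\<in>V. E v v)"

definition is_walk :: "'a set \<Rightarrow> ('a \<Rightarrow> 'a \<Rightarrow> bool) \<Rightarrow> 'a list \<Rightarrow> bool" where
  "is_walk V E ws \<longleftrightarrow> length ws \<ge> 2 \<and> set ws \<subseteq> V \<and>
     (\<forall>j. j + 1 < length ws \<longrightarrow> E (ws ! j) (ws ! (j + 1)))"

definition Zset :: "'a set \<Rightarrow> ('a \<times> 'a) set" where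
  "Zset V = {(u, v). u \<in> V \<and> v \<in> V \<and> u \<noteq> v}"

definition forces :: "('a \<Rightarrow> 'a \<Rightarrow> bool) \<Rightarrow> 'a \<times> 'a \<Rightarrow> 'a \<times> 'a \<Rightarrow> bool" where
  "forces E p q \<longleftrightarrow> (case p of (u, v) \<Rightarrow> case q of (u', v') \<Rightarrow>
     (u = u' \<and> v = v') \<or> (E u u' \<and> E v v' \<and> \<not> E u v' \<and> \<not> E v u'))"

definition implies_pair :: "'a set \<Rightarrow> ('a \<Rightarrow> 'a \<Rightarrow> bool) \<Rightarrow> 'a \<times> 'a \<Rightarrow> 'a \<times> 'a \<Rightarrow> bool" where
  "implies_pair V E p q \<longleftrightarrow> p \<in> Zset V \<and> q \<in> Zset V \<and>
     (\<exists>ws zs. is_walk V E ws \<and> is_walk V E zs \<and> length ws = length zs \<and>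
        (hd ws, hd zs) = p \<and> (last ws, last zs) = q \<and>
        (\<forall>j < length ws. (ws ! j, zs ! j) \<in> Zset V) \<and>
        (\<forall>j. j + 1 < length ws \<longrightarrow> forces E (ws ! j, zs ! j) (ws ! (j + 1), zs ! (j + 1))))"

definition induces_C4 :: "('a \<Rightarrow> 'a \<Rightarrow> bool) \<Rightarrow> 'a set \<Rightarrow> bool" where
  "induces_C4 E S \<longleftrightarrow> (\<exists>a b c d. S = {a, b, c, d} \<and> distinct [a, b, c, d] \<and>
     E a b \<and> E b c \<and> E c d \<and> E d a \<and> \<not> E a c \<and> \<not> E b d)"

definition induces_P4 :: "('a \<Rightarrow> 'a \<Rightarrow> bool) \<Rightarrow> 'a set \<Rightarrow> bool" where
  "induces_P4 E S \<longleftrightarrow> (\<exists>a b c d. S = {a, b, c, d} \<and> distinct [a, b, c, d] \<and>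
     E a b \<and> E b c \<and> E c d \<and> \<not> E a c \<and> \<not> E b d \<and> \<not> E a d)"

definition induces_2K2 :: "('a \<Rightarrow> 'a \<Rightarrow> bool) \<Rightarrow> 'a set \<Rightarrow> bool" where
  "induces_2K2 E S \<longleftrightarrow> (\<exists>a b c d. S = {a, b, c, d} \<and> distinct [a, b, c, d] \<and>
     E a b \<and> E c d \<and> \<not> E a c \<and> \<not> E a d \<and> \<not> E b c \<and> \<not> E b d)"

definition avoids :: "('a \<Rightarrow> 'a \<Rightarrow> bool) \<Rightarrow> 'a \<times> 'a \<Rightarrow> 'a \<times> 'a \<Rightarrow> bool" where
  "avoids E e f \<longleftrightarrow> (case e of (u, u') \<Rightarrow> case f of (v, v') \<Rightarrow>
     E u u' \<and> E v v' \<and> {u, u'} \<inter> {v, v'} = {} \<and>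
     ((u = u' \<and> v = v' \<and> \<not> E u v) \<or>
      (u = u' \<and> v \<noteq> v' \<and> \<not> E u v \<and> \<not> E u v') \<or>
      (u \<noteq> u' \<and> v = v' \<and> \<not> E u v \<and> \<not> E u' v) \<or>
      (u \<noteq> u' \<and> v \<noteq> v' \<and>
        (induces_2K2 E {u, u', v, v'} \<or> induces_P4 E {u, u', v, v'} \<or> induces_C4 E {u, u', v, v'}))))"

definition avoids_walk :: "('a \<Rightarrow> 'a \<Rightarrow> bool) \<Rightarrow> 'a \<times> 'a \<Rightarrow> 'a list \<Rightarrow> bool" where
  "avoids_walk E e ws \<longleftrightarrow> (\<forall>j. j + 1 < length ws \<longrightarrow> avoids E e (ws ! j, ws ! (j + 1)))"

end

theory Submission
  imports Defs
begin

inductive chain :: "'a set \<Rightarrow> ('a \<Rightarrow> 'a \<Rightarrow> bool) \<Rightarrow> 'a \<times> 'a \<Rightarrow> 'a \<times> 'a \<Rightarrow> bool"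
  for V E where
  ch_refl: "p \<in> Zset V \<Longrightarrow> chain V E p p"
| ch_step: "p \<in> Zset V \<Longrightarrow> forces E p q \<Longrightarrow> chain V E q r \<Longrightarrow> chain V E p r"

lemma chain_trans: "chain V E p q \<Longrightarrow> chain V E q r \<Longrightarrow> chain V E p r"
  by (induction rule: chain.induct) (auto intro: ch_step)

lemma chain_zset: "chain V E p q \<Longrightarrow> p \<in> Zset V \<and> q \<in> Zset V"
  by (induction rule: chain.induct) auto

lemma is_walk_Cons:
  assumes "is_walk V E ws" "a \<in> V" "E a (ws ! 0)"
  shows "is_walk V E (a # ws)"
  unfolding is_walk_def
proof (intro conjI allI impI)
  show "2 \<le> length (a # ws)" using assms unfolding is_walk_def by auto
  show "set (a # ws) \<subseteq> V" using assms unfolding is_walk_def by auto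
  fix j assume "j + 1 < length (a # ws)"
  then show "E ((a # ws) ! j) ((a # ws) ! (j + 1))"
    using assms unfolding is_walk_def by (cases j) auto
qed

lemma chain_imp:
  assumes G: "reflexive_graph V E" and c: "chain V E p q"
  shows "implies_pair V E p q"
  using c
proof (induction rule: chain.induct)
  case (ch_refl p)
  obtain a b where p: "p = (a, b)" by (cases p)
  have ab: "a \<in> V" "b \<in> V" "a \<noteq> b" using ch_refl p by (auto simp: Zset_def)
  have Ea: "E a a" "E b b" using G ab unfolding reflexive_graph_def by auto
  have "is_walk V E [a, a]" "is_walk V E [b, b]" using ab Ea
    by (auto simp: is_walk_def less_Suc_eq nth_Cons')
  moreover have "\<forall>j<length [a,a]. ([a,a] ! j, [b,b] ! j) \<in> Zset V"
    using ch_refl p by (auto simp: less_Suc_eq nth_Cons')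
  moreover have "\<forall>j. j + 1 < length [a,a] \<longrightarrow> forces E ([a,a] ! j, [b,b] ! j) ([a,a] ! (j + 1), [b,b] ! (j + 1))"
    by (auto simp: forces_def)
  ultimately have "\<exists>ws zs. is_walk V E ws \<and> is_walk V E zs \<and> length ws = length zs \<and>
        (hd ws, hd zs) = p \<and> (last ws, last zs) = p \<and>
        (\<forall>j < length ws. (ws ! j, zs ! j) \<in> Zset V) \<and>
        (\<forall>j. j + 1 < length ws \<longrightarrow> forces E (ws ! j, zs ! j) (ws ! (j + 1), zs ! (j + 1)))"
    using p by (intro exI[of _ "[a,a]"] exI[of _ "[b,b]"]) simp
  then show ?case using ch_refl unfolding implies_pair_def by blast
next
  case (ch_step p q r)
  obtain a b where p: "p = (a, b)" by (cases p)
  from ch_step.IH obtain ws zs where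
    w: "is_walk V E ws" "is_walk V E zs" "length ws = length zs"
    "(hd ws, hd zs) = q" "(last ws, last zs) = r"
    "\<forall>j < length ws. (ws ! j, zs ! j) \<in> Zset V"
    "\<forall>j. j + 1 < length ws \<longrightarrow> forces E (ws ! j, zs ! j) (ws ! (j + 1), zs ! (j + 1))"
    and qz: "q \<in> Zset V" and rz: "r \<in> Zset V"
    unfolding implies_pair_def by blast
  have ab: "a \<in> V" "b \<in> V" "a \<noteq> b" using ch_step p by (auto simp: Zset_def)
  have Ea: "E a a" "E b b" using G ab unfolding reflexive_graph_def by auto
  have ne: "ws \<noteq> []" "zs \<noteq> []" using w unfolding is_walk_def by auto
  have h0: "ws ! 0 = fst q" "zs ! 0 = snd q" using w(4) ne by (auto simp: hd_conv_nth)
  have E1: "E a (fst q)" "E b (snd q)" using ch_step(2) p Ea by (auto simp: forces_def split: prod.splits)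
  have f1: "forces E (a, b) (ws ! 0, zs ! 0)" using ch_step(2) p h0 by (cases q) auto
  have W1: "is_walk V E (a # ws)"
    using w(1) ab E1 h0 by (intro is_walk_Cons) auto
  have W2: "is_walk V E (b # zs)"
    using w(2) ab E1 h0 by (intro is_walk_Cons) auto
  have Z: "\<forall>j < length (a # ws). ((a # ws) ! j, (b # zs) ! j) \<in> Zset V"
    using w(6) ch_step(1) p by (auto simp: nth_Cons')
  have F: "\<forall>j. j + 1 < length (a # ws) \<longrightarrow> forces E ((a # ws) ! j, (b # zs) ! j) ((a # ws) ! (j + 1), (b # zs) ! (j + 1))"
  proof (intro allI impI)
    fix j assume "j + 1 < length (a # ws)"
    then show "forces E ((a # ws) ! j, (b # zs) ! j) ((a # ws) ! (j + 1), (b # zs) ! (j + 1))"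
      using f1 w(7) by (cases j) auto
  qed
  have "(last (a # ws), last (b # zs)) = r" using w(5) ne by simp
  then show ?case unfolding implies_pair_def
    using ch_step(1) p rz W1 W2 w(3) Z F by (intro conjI; (simp; fail)?) (rule exI[of _ "a # ws"], rule exI[of _ "b # zs"], simp)
qed

lemma nonadj_w:
  assumes sym: "\<And>x y. E x y \<Longrightarrow> E y x"
    and ind: "induces_2K2 E S \<or> induces_P4 E S \<or> induces_C4 E S" and w: "w \<in> S"
  shows "\<exists>w'\<in>S. w' \<noteq> w \<and> \<not> E w w'"
  using ind
proof (elim disjE)
  assume "induces_2K2 E S"
  then obtain a b c d where h: "S = {a,b,c,d}" "distinct [a,b,c,d]"
    "E a b" "E c d" "\<not> E a c" "\<not> E a d" "\<not> E b c" "\<not> E b d"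
    unfolding induces_2K2_def by blast
  show ?thesis using h w sym by auto
next
  assume "induces_P4 E S"
  then obtain a b c d where h: "S = {a,b,c,d}" "distinct [a,b,c,d]"
    "E a b" "E b c" "E c d" "\<not> E a c" "\<not> E b d" "\<not> E a d"
    unfolding induces_P4_def by blast
  show ?thesis using h w sym by auto
next
  assume "induces_C4 E S"
  then obtain a b c d where h: "S = {a,b,c,d}" "distinct [a,b,c,d]"
    "E a b" "E b c" "E c d" "E d a" "\<not> E a c" "\<not> E b d"
    unfolding induces_C4_def by blast
  show ?thesis using h w sym by auto
qed

lemma C4_deg:
  assumes sym: "\<And>x y. E x y \<Longrightarrow> E y x"
    and ind: "induces_C4 E S" and w: "w \<in> S"
  shows "\<exists>n1\<in>S. \<exists>n2\<in>S. n1 \<noteq> n2 \<and> n1 \<noteq> w \<and> n2 \<noteq> w \<and> E w n1 \<and> E w n2"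
proof -
  obtain a b c d where h: "S = {a,b,c,d}" "distinct [a,b,c,d]"
    "E a b" "E b c" "E c d" "E d a" "\<not> E a c" "\<not> E b d"
    using ind unfolding induces_C4_def by blast
  have "w = a \<or> w = b \<or> w = c \<or> w = d" using h w by auto
  then show ?thesis
  proof (elim disjE)
    assume "w = a" then show ?thesis using h sym by (intro bexI[of _ b] bexI[of _ d]) auto
  next
    assume "w = b" then show ?thesis using h sym by (intro bexI[of _ a] bexI[of _ c]) auto
  next
    assume "w = c" then show ?thesis using h sym by (intro bexI[of _ b] bexI[of _ d]) auto
  next
    assume "w = d" then show ?thesis using h sym by (intro bexI[of _ a] bexI[of _ c]) auto
  qed
qed

lemma C4_card:
  assumes "induces_C4 E S" shows "card S = 4"
  using assms unfolding induces_C4_def by auto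

lemma C4_nbr:
  assumes sym: "\<And>x y. E x y \<Longrightarrow> E y x"
    and ind: "induces_C4 E {p,q,v,v'}" and w: "w \<in> {p,q}"
  shows "\<exists>z\<in>{v,v'}. E w z"
proof -
  obtain n1 n2 where n: "n1 \<in> {p,q,v,v'}" "n2 \<in> {p,q,v,v'}" "n1 \<noteq> n2" "n1 \<noteq> w" "n2 \<noteq> w" "E w n1" "E w n2"
    using C4_deg[OF sym ind] w by blast
  then show ?thesis using w by auto
qed

lemma avoid_facts:
  assumes G: "reflexive_graph V E" and av: "avoids E (v, v') (a, b)"
  shows "E a b \<and> E v v' \<and> a \<notin> {v,v'} \<and> b \<notin> {v,v'} \<and> \<not> (E a v \<and> E a v') \<and> \<not> (E b v \<and> E b v')
    \<and> \<not> (E a v \<and> E b v) \<and> \<not> (E a v' \<and> E b v')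
    \<and> (\<not> induces_C4 E {a,b,v,v'} \<longrightarrow> \<not> (E a v \<and> E b v') \<and> \<not> (E a v' \<and> E b v))"
proof -
  have sym: "\<And>x y. E x y \<Longrightarrow> E y x" using G unfolding reflexive_graph_def by blast
  have base: "E a b" "E v v'" "{v,v'} \<inter> {a,b} = {}" using av unfolding avoids_def by auto
  have cases: "(v = v' \<and> a = b \<and> \<not> E v a) \<or> (v = v' \<and> a \<noteq> b \<and> \<not> E v a \<and> \<not> E v b) \<or>
      (v \<noteq> v' \<and> a = b \<and> \<not> E v a \<and> \<not> E v' a) \<or>
      (v \<noteq> v' \<and> a \<noteq> b \<and> (induces_2K2 E {v,v',a,b} \<or> induces_P4 E {v,v',a,b} \<or> induces_C4 E {v,v',a,b}))"
    using av unfolding avoids_def by auto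
  have S: "{v,v',a,b} = {a,b,v,v'}" by auto
  show ?thesis
  proof (cases "v \<noteq> v' \<and> a \<noteq> b")
    case False
    then have "\<not> E v a \<and> \<not> E v' a \<and> \<not> E v b \<and> \<not> E v' b" using cases by auto
    then show ?thesis using base sym by blast
  next
    case True
    then have ind: "induces_2K2 E {a,b,v,v'} \<or> induces_P4 E {a,b,v,v'} \<or> induces_C4 E {a,b,v,v'}"
      using cases S by auto
    have f2: "\<not> (E a v \<and> E a v')" using nonadj_w[OF sym ind, of a] base by auto
    have f3: "\<not> (E b v \<and> E b v')" using nonadj_w[OF sym ind, of b] base sym by auto
    have f4: "\<not> (E a v \<and> E b v)" using nonadj_w[OF sym ind, of v] base sym by auto
    have f5: "\<not> (E a v' \<and> E b v')" using nonadj_w[OF sym ind, of v'] base sym by auto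
    have f6: "\<not> induces_C4 E {a,b,v,v'} \<longrightarrow> \<not> (E a v \<and> E b v') \<and> \<not> (E a v' \<and> E b v)"
    proof (intro impI conjI notI)
      assume nc: "\<not> induces_C4 E {a,b,v,v'}" and h: "E a v \<and> E b v'"
      have "induces_C4 E {a,b,v,v'}" unfolding induces_C4_def
        apply (rule exI[of _ a], rule exI[of _ b], rule exI[of _ v'], rule exI[of _ v])
        using h f2 f3 base True sym by auto
      then show False using nc by blast
    next
      assume nc: "\<not> induces_C4 E {a,b,v,v'}" and h: "E a v' \<and> E b v"
      have "induces_C4 E {a,b,v,v'}" unfolding induces_C4_def
        apply (rule exI[of _ a], rule exI[of _ b], rule exI[of _ v], rule exI[of _ v'])
        using h f2 f3 base True sym by auto
      then show False using nc by blast
    qed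
    show ?thesis using f2 f3 f4 f5 f6 base by blast
  qed
qed

lemma step_lemma:
  assumes G: "reflexive_graph V E" and av: "avoids E (v, v') (a, b)"
    and ab: "a \<in> V" "b \<in> V" and x: "x \<in> {v,v'}" and y: "y \<in> {v,v'}"
    and cx: "induces_C4 E {a,b,v,v'} \<longrightarrow> E a x"
    and cy: "induces_C4 E {a,b,v,v'} \<longrightarrow> E b y"
  shows "chain V E (a, x) (b, y)"
proof -
  have sym: "\<And>x y. E x y \<Longrightarrow> E y x" and refl: "\<And>x. x \<in> V \<Longrightarrow> E x x"
    and inV: "\<And>x y. E x y \<Longrightarrow> x \<in> V \<and> y \<in> V"
    using G unfolding reflexive_graph_def by blast+
  note F = avoid_facts[OF G av]
  have Eab: "E a b" and Evv': "E v v'" and dis: "a \<notin> {v,v'}" "b \<notin> {v,v'}"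
    and n2: "\<not> (E a v \<and> E a v')" and n3: "\<not> (E b v \<and> E b v')"
    and n4: "\<not> (E a v \<and> E b v)" "\<not> (E a v' \<and> E b v')"
    and n6: "\<not> induces_C4 E {a,b,v,v'} \<Longrightarrow> \<not> (E a v \<and> E b v') \<and> \<not> (E a v' \<and> E b v)"
    using F by simp_all
  have vV: "v \<in> V" "v' \<in> V" using inV[OF Evv'] by simp_all
  have Ev'v: "E v' v" using sym[OF Evv'] .
  have Evv: "\<And>p q. p \<in> {v,v'} \<Longrightarrow> q \<in> {v,v'} \<Longrightarrow> E p q"
    using Evv' Ev'v refl[OF vV(1)] refl[OF vV(2)] by auto
  have Z: "\<And>u p. u \<in> V \<Longrightarrow> p \<in> {v,v'} \<Longrightarrow> u \<in> {a,b} \<Longrightarrow> (u, p) \<in> Zset V"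
    using dis vV unfolding Zset_def by auto
  have nsym: "\<And>p q. \<not> E p q \<Longrightarrow> \<not> E q p" using sym by blast
  show ?thesis
  proof (cases "induces_C4 E {a,b,v,v'}")
    case True
    then have ex: "E a x" "E b y" using cx cy by auto
    have "\<not> E a y" "\<not> E b x"
      using ex n2 n3 n4 x y by auto
    then have "\<not> E a y" "\<not> E x b" using nsym by auto
    then have "forces E (a, x) (b, y)" using Eab Evv[OF x y] unfolding forces_def by simp
    moreover have "(a, x) \<in> Zset V" "(b, y) \<in> Zset V" using Z ab x y by auto
    ultimately show ?thesis by (meson ch_step ch_refl)
  next
    case False
    have n6': "\<not> (E a v \<and> E b v')" "\<not> (E a v' \<and> E b v)" using n6 False by simp_all
    have free: "(\<not> E a v \<and> \<not> E a v') \<or> (\<not> E b v \<and> \<not> E b v')" using n6' n4 by blast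
    then show ?thesis
    proof (elim disjE)
      assume fa: "\<not> E a v \<and> \<not> E a v'"
      define x0 where "x0 = (if E b v then v' else v)"
      have x0: "x0 \<in> {v,v'}" "\<not> E b x0" using n3 unfolding x0_def by auto
      have nax: "\<not> E a x" "\<not> E a x0" using fa x x0(1) by auto
      have fa': "\<not> E x a" "\<not> E x0 a" "\<not> E x0 b" using nsym nax x0(2) by auto
      have f1: "forces E (a, x) (a, x0)" using nax fa' Evv[OF x x0(1)] refl[OF ab(1)] unfolding forces_def by simp
      have nay: "\<not> E a y" using fa y by auto
      have f2: "forces E (a, x0) (b, y)" using nay fa' Evv[OF x0(1) y] Eab unfolding forces_def by simp
      have "(a, x) \<in> Zset V" "(a, x0) \<in> Zset V" "(b, y) \<in> Zset V" using Z ab x y x0 by auto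
      then show ?thesis using f1 f2 by (meson ch_step ch_refl)
    next
      assume fb: "\<not> E b v \<and> \<not> E b v'"
      define y0 where "y0 = (if E a v then v' else v)"
      have y0: "y0 \<in> {v,v'}" "\<not> E a y0" using n2 unfolding y0_def by auto
      have nbx: "\<not> E b x" "\<not> E b y0" "\<not> E b y" using fb x y y0(1) by auto
      have fb': "\<not> E x b" "\<not> E y0 b" using nsym nbx by auto
      have f1: "forces E (a, x) (b, y0)" using y0(2) fb' Evv[OF x y0(1)] Eab unfolding forces_def by simp
      have f2: "forces E (b, y0) (b, y)" using nbx fb' Evv[OF y0(1) y] refl[OF ab(2)] unfolding forces_def by simp
      have "(a, x) \<in> Zset V" "(b, y0) \<in> Zset V" "(b, y) \<in> Zset V" using Z ab x y y0 by auto
      then show ?thesis using f1 f2 by (meson ch_step ch_refl)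
    qed
  qed
qed

lemma main_lemma:
  assumes G: "reflexive_graph V E"
  shows "length us \<ge> 2 \<Longrightarrow> set us \<subseteq> V \<Longrightarrow>
    (\<forall>j. j + 1 < length us \<longrightarrow> avoids E (v, v') (us ! j, us ! (j + 1))) \<Longrightarrow>
    x \<in> {v,v'} \<Longrightarrow> y \<in> {v,v'} \<Longrightarrow>
    (induces_C4 E {us ! 0, us ! 1, v, v'} \<longrightarrow> E (us ! 0) x) \<Longrightarrow>
    (induces_C4 E {us ! (length us - 2), us ! (length us - 1), v, v'} \<longrightarrow> E (us ! (length us - 1)) y) \<Longrightarrow>
    chain V E (us ! 0, x) (us ! (length us - 1), y)"
proof (induction us arbitrary: x)
  case Nil
  then show ?case by simp
next
  case (Cons u0 us')
  have sym: "\<And>x y. E x y \<Longrightarrow> E y x" using G unfolding reflexive_graph_def by blast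
  have av0: "avoids E (v, v') (u0, us' ! 0)" using Cons.prems(3)[rule_format, of 0] Cons.prems(1) by (cases us') auto
  show ?case
  proof (cases "length us' = 1")
    case True
    then obtain u1 where us': "us' = [u1]" by (cases us') auto
    show ?thesis using Cons.prems us' av0
      by simp (rule step_lemma[OF G]; simp)
  next
    case False
    then have len: "length us' \<ge> 2" using Cons.prems(1) by simp
    have av': "\<forall>j. j + 1 < length us' \<longrightarrow> avoids E (v, v') (us' ! j, us' ! (j + 1))"
      using Cons.prems(3) by auto
    define u1 where "u1 = us' ! 0"
    have ex: "\<exists>z\<in>{v,v'}. (induces_C4 E {u0, u1, v, v'} \<or> induces_C4 E {u1, us' ! 1, v, v'}) \<longrightarrow> E u1 z"
    proof (cases "induces_C4 E {u0, u1, v, v'}")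
      case True
      then show ?thesis using C4_nbr[OF sym True, of u1] by blast
    next
      case F1: False
      show ?thesis
      proof (cases "induces_C4 E {u1, us' ! 1, v, v'}")
        case True
        then show ?thesis using C4_nbr[OF sym True, of u1] by blast
      next
        case False
        then show ?thesis using F1 by blast
      qed
    qed
    then obtain z where z: "z \<in> {v,v'}"
      "(induces_C4 E {u0, u1, v, v'} \<or> induces_C4 E {u1, us' ! 1, v, v'}) \<longrightarrow> E u1 z" by blast
    have setV: "u0 \<in> V" "set us' \<subseteq> V" using Cons.prems(2) by auto
    have "us' ! 0 \<in> set us'" using len by (intro nth_mem) auto
    then have u1V: "u1 \<in> V" using setV unfolding u1_def by blast
    have c1: "chain V E (u0, x) (u1, z)"
      using step_lemma[OF G av0[folded u1_def] setV(1) u1V Cons.prems(4) z(1)] Cons.prems(6) z(2) u1_def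
      by simp
    have l1: "length (u0 # us') - 1 = Suc (length us' - 1)" "length (u0 # us') - 2 = Suc (length us' - 2)"
      using len by auto
    have idx: "(u0 # us') ! (length us') = us' ! (length us' - 1)"
      "(u0 # us') ! (Suc (length us' - 2)) = us' ! (length us' - 2)"
      using len by (auto simp: nth_Cons')
    have c2: "chain V E (us' ! 0, z) (us' ! (length us' - 1), y)"
      apply (rule Cons.IH[OF len setV(2) av' z(1) Cons.prems(5)])
      using z(2) u1_def apply simp
      using Cons.prems(7) l1 idx by (simp add: numeral_2_eq_2)
    show ?thesis using chain_trans[OF c1 c2[folded u1_def]] l1 idx by simp
  qed
qed

lemma the_nbr:
  assumes G: "reflexive_graph V E" and av: "avoids E (v, v') (a, b)"
    and C: "induces_C4 E {a, b, v, v'}" and w: "w \<in> {a, b}"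
  shows "(THE x. x \<in> {v, v'} \<and> E w x) \<in> {v, v'} \<and> E w (THE x. x \<in> {v, v'} \<and> E w x)"
proof -
  have sym: "\<And>x y. E x y \<Longrightarrow> E y x" using G unfolding reflexive_graph_def by blast
  obtain z where z: "z \<in> {v, v'}" "E w z" using C4_nbr[OF sym C w] by blast
  have n: "\<not> (E a v \<and> E a v')" "\<not> (E b v \<and> E b v')" using avoid_facts[OF G av] by simp_all
  have "\<exists>!x. x \<in> {v, v'} \<and> E w x"
    using z n w by blast
  then show ?thesis by (rule theI')
qed

theorem lemma5:
  fixes V :: "'a set" and E :: "'a \<Rightarrow> 'a \<Rightarrow> bool" and us :: "'a list" and v v' :: 'a
  assumes G: "reflexive_graph V E"
    and W: "is_walk V E us"
    and e: "E v v'"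
    and av: "avoids_walk E (v, v') us"
  defines "t \<equiv> length us - 1"
  shows
    "(\<not> induces_C4 E {us ! 0, us ! 1, v, v'} \<and> \<not> induces_C4 E {us ! (t - 1), us ! t, v, v'}
       \<longrightarrow> (\<forall>x\<in>{v, v'}. \<forall>y\<in>{v, v'}. implies_pair V E (us ! 0, x) (us ! t, y)))
   \<and> (induces_C4 E {us ! 0, us ! 1, v, v'} \<and> \<not> induces_C4 E {us ! (t - 1), us ! t, v, v'}
       \<longrightarrow> (\<forall>y\<in>{v, v'}. implies_pair V E (us ! 0, THE x. x \<in> {v, v'} \<and> E (us ! 0) x) (us ! t, y)))
   \<and> (induces_C4 E {us ! 0, us ! 1, v, v'} \<and> induces_C4 E {us ! (t - 1), us ! t, v, v'}
       \<longrightarrow> implies_pair V E (us ! 0, THE x. x \<in> {v, v'} \<and> E (us ! 0) x)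
                            (us ! t, THE y. y \<in> {v, v'} \<and> E (us ! t) y))"
proof -
  have len: "length us \<ge> 2" and sV: "set us \<subseteq> V" using W unfolding is_walk_def by auto
  have avj: "\<forall>j. j + 1 < length us \<longrightarrow> avoids E (v, v') (us ! j, us ! (j + 1))"
    using av unfolding avoids_walk_def by blast
  have t1: "t - 1 = length us - 2" "t = length us - 1" unfolding t_def by auto
  have av0: "avoids E (v, v') (us ! 0, us ! 1)" using avj len by auto
  have tt: "t - 1 + 1 = t" "t - 1 + 1 < length us" using len unfolding t_def by auto
  have avt: "avoids E (v, v') (us ! (t - 1), us ! t)"
    using avj[rule_format, OF tt(2)] tt(1) by simp
  note M = main_lemma[OF G len sV avj, folded t1]
  have T0: "induces_C4 E {us ! 0, us ! 1, v, v'} \<Longrightarrow>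
      (THE x. x \<in> {v, v'} \<and> E (us ! 0) x) \<in> {v, v'} \<and> E (us ! 0) (THE x. x \<in> {v, v'} \<and> E (us ! 0) x)"
    using the_nbr[OF G av0] by blast
  have Tt: "induces_C4 E {us ! (t - 1), us ! t, v, v'} \<Longrightarrow>
      (THE x. x \<in> {v, v'} \<and> E (us ! t) x) \<in> {v, v'} \<and> E (us ! t) (THE x. x \<in> {v, v'} \<and> E (us ! t) x)"
    using the_nbr[OF G avt] by blast
  show ?thesis
  proof (intro conjI impI ballI)
    fix x y assume "\<not> induces_C4 E {us ! 0, us ! 1, v, v'} \<and> \<not> induces_C4 E {us ! (t - 1), us ! t, v, v'}"
      "x \<in> {v, v'}" "y \<in> {v, v'}"
    then show "implies_pair V E (us ! 0, x) (us ! t, y)"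
      using M[of x y] chain_imp[OF G] by blast
  next
    fix y assume h: "induces_C4 E {us ! 0, us ! 1, v, v'} \<and> \<not> induces_C4 E {us ! (t - 1), us ! t, v, v'}"
      "y \<in> {v, v'}"
    then show "implies_pair V E (us ! 0, THE x. x \<in> {v, v'} \<and> E (us ! 0) x) (us ! t, y)"
      using M[of "THE x. x \<in> {v, v'} \<and> E (us ! 0) x" y] T0 chain_imp[OF G] by blast
  next
    assume h: "induces_C4 E {us ! 0, us ! 1, v, v'} \<and> induces_C4 E {us ! (t - 1), us ! t, v, v'}"
    then show "implies_pair V E (us ! 0, THE x. x \<in> {v, v'} \<and> E (us ! 0) x)
                            (us ! t, THE y. y \<in> {v, v'} \<and> E (us ! t) y)"
      using M[of "THE x. x \<in> {v, v'} \<and> E (us ! 0) x" "THE y. y \<in> {v, v'} \<and> E (us ! t) y"] T0 Tt chain_imp[OF G] by blast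
  qed
qed

end
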